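(* Let $H$ be a bigraph and $a,c$ distinct vertices of $H$. The vertex $(a,c)$ of $H^+$ is implied by some non-trivial strong component $S$ of $H^+$ (i.e. $(a,c)\notin S$ and some vertex of $S$ has an arc to $(a,c)$) if and only if $H$ contains an induced path $a,b,c,d,e$ with $N(a)\subseteq N(c)$. Moreover, if such a path exists, then the non-trivial strong component implying $(a,c)$ contains the pairs $(a,d),(a,e),(b,d),(b,e)$.
   Context: A bigraph is a bipartite graph $H$ with fixed bipartition $(B,W)$ (black/white colours); $N(x)$ is the neighbourhood of $x$ in $H$. The pair-digraph $H^+$ has vertices all ordered pairs $(u,v)$ of distinct vertices of $H$, and arcs $(u,v)\to(u',v)$ whenever $u,v$ have the same colour, $uu'\in E(H)$, $vu'\notin E(H)$, and $(u,v)\to(u,v')$ whenever $u,v$ have different colours, $vv'\in E(H)$, $uv\notin E(H)$. A strong component is non-trivial if it has more than one vertex. *)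

theory Defs
  imports Main
begin

definition bigraph :: "'a set \<Rightarrow> ('a \<Rightarrow> 'a \<Rightarrow> bool) \<Rightarrow> 'a set \<Rightarrow> 'a set \<Rightarrow> bool" where
  "bigraph V E B W \<longleftrightarrow> finite V \<and> V = B \<union> W \<and> B \<inter> W = {} \<and>
     (\<forall>x y. E x y \<longrightarrow> x \<in> V \<and> y \<in> V) \<and>
     (\<forall>x y. E x y \<longrightarrow> E y x) \<and>
     (\<forall>x y. E x y \<longrightarrow> (x \<in> B \<and> y \<in> W) \<or> (x \<in> W \<and> y \<in> B))"

definition nbhd :: "('a \<Rightarrow> 'a \<Rightarrow> bool) \<Rightarrow> 'a \<Rightarrow> 'a set" where
  "nbhd E x = {y. E x y}"

definition same_colour :: "'a set \<Rightarrow> 'a set \<Rightarrow> 'a \<Rightarrow> 'a \<Rightarrow> bool" where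
  "same_colour B W u v \<longleftrightarrow> (u \<in> B \<and> v \<in> B) \<or> (u \<in> W \<and> v \<in> W)"

definition pair_verts :: "'a set \<Rightarrow> ('a \<times> 'a) set" where
  "pair_verts V = {(u, v). u \<in> V \<and> v \<in> V \<and> u \<noteq> v}"

definition pair_arc :: "'a set \<Rightarrow> ('a \<Rightarrow> 'a \<Rightarrow> bool) \<Rightarrow> 'a set \<Rightarrow> 'a set \<Rightarrow>
    'a \<times> 'a \<Rightarrow> 'a \<times> 'a \<Rightarrow> bool" where
  "pair_arc V E B W p q \<longleftrightarrow> p \<in> pair_verts V \<and> q \<in> pair_verts V \<and>
     (let (u, v) = p; (u', v') = q in
       (same_colour B W u v \<and> v' = v \<and> E u u' \<and> \<not> E v u') \<or>
       (\<not> same_colour B W u v \<and> u' = u \<and> E v v' \<and> \<not> E u v))"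

definition pair_reach :: "'a set \<Rightarrow> ('a \<Rightarrow> 'a \<Rightarrow> bool) \<Rightarrow> 'a set \<Rightarrow> 'a set \<Rightarrow>
    'a \<times> 'a \<Rightarrow> 'a \<times> 'a \<Rightarrow> bool" where
  "pair_reach V E B W = (pair_arc V E B W)\<^sup>*\<^sup>*"

definition strong_component :: "'a set \<Rightarrow> ('a \<Rightarrow> 'a \<Rightarrow> bool) \<Rightarrow> 'a set \<Rightarrow> 'a set \<Rightarrow>
    ('a \<times> 'a) set \<Rightarrow> bool" where
  "strong_component V E B W S \<longleftrightarrow> (\<exists>x \<in> pair_verts V.
     S = {y \<in> pair_verts V. pair_reach V E B W x y \<and> pair_reach V E B W y x})"

definition nontrivial_strong_component where
  "nontrivial_strong_component V E B W S \<longleftrightarrow> strong_component V E B W S \<and> card S > 1"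

definition implies_pair where
  "implies_pair V E B W S p \<longleftrightarrow> p \<notin> S \<and> (\<exists>q \<in> S. pair_arc V E B W q p)"

definition induced_path :: "'a set \<Rightarrow> ('a \<Rightarrow> 'a \<Rightarrow> bool) \<Rightarrow> 'a list \<Rightarrow> bool" where
  "induced_path V E xs \<longleftrightarrow> distinct xs \<and> set xs \<subseteq> V \<and>
     (\<forall>i < length xs. \<forall>j < length xs. E (xs ! i) (xs ! j) \<longleftrightarrow> (i = j + 1 \<or> j = i + 1))"

end

theory Submission
  imports Defs
begin

lemma bg_edge:
  assumes "bigraph V E B W" "E x y"
  shows "x \<in> V \<and> y \<in> V \<and> E y x \<and> (x \<in> B \<longleftrightarrow> y \<notin> B)"
  using assms unfolding bigraph_def by blast

lemma bg_V: "bigraph V E B W \<Longrightarrow> x \<in> V \<Longrightarrow> x \<in> W \<longleftrightarrow> x \<notin> B"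
  unfolding bigraph_def by blast

lemma arc_iff:
  assumes "bigraph V E B W"
  shows "pair_arc V E B W (u,v) (u',v') \<longleftrightarrow> u \<in> V \<and> v \<in> V \<and> u \<noteq> v \<and> u' \<in> V \<and> v' \<in> V \<and> u' \<noteq> v' \<and>
     (((u \<in> B \<longleftrightarrow> v \<in> B) \<and> v' = v \<and> E u u' \<and> \<not> E v u') \<or>
      (\<not> (u \<in> B \<longleftrightarrow> v \<in> B) \<and> u' = u \<and> E v v' \<and> \<not> E u v))"
  using bg_V[OF assms, of u] bg_V[OF assms, of v]
  unfolding pair_arc_def pair_verts_def same_colour_def by auto

lemma reach_arc: "pair_arc V E B W p q \<Longrightarrow> pair_reach V E B W p q"
  unfolding pair_reach_def by auto

lemma reach_trans: "pair_reach V E B W p q \<Longrightarrow> pair_reach V E B W q r \<Longrightarrow> pair_reach V E B W p r"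
  unfolding pair_reach_def by auto

lemma comp_mem:
  assumes "strong_component V E B W S" "q \<in> S" "p \<in> pair_verts V"
    "pair_reach V E B W p q" "pair_reach V E B W q p"
  shows "p \<in> S"
  using assms unfolding strong_component_def by (auto intro: reach_trans)

lemma comp_sub: "strong_component V E B W S \<Longrightarrow> S \<subseteq> pair_verts V"
  unfolding strong_component_def by auto

lemma comp_reach: "strong_component V E B W S \<Longrightarrow> p \<in> S \<Longrightarrow> q \<in> S \<Longrightarrow> pair_reach V E B W p q"
  unfolding strong_component_def by (auto intro: reach_trans)

lemma arc_verts: "pair_arc V E B W p q \<Longrightarrow> p \<in> pair_verts V \<and> q \<in> pair_verts V"
  unfolding pair_arc_def by auto

lemma pred_in:
  assumes "nontrivial_strong_component V E B W S" "p \<in> S"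
  shows "\<exists>z \<in> S. pair_arc V E B W z p"
proof -
  have sc: "strong_component V E B W S" and c: "card S > 1"
    using assms unfolding nontrivial_strong_component_def by auto
  have "\<exists>y \<in> S. y \<noteq> p"
  proof (rule ccontr)
    assume "\<not> ?thesis"
    then have "S \<subseteq> {p}" by auto
    then have "card S \<le> card {p}" by (intro card_mono) auto
    with c show False by simp
  qed
  then obtain y where y: "y \<in> S" "y \<noteq> p" by blast
  have "pair_reach V E B W y p" using comp_reach[OF sc y(1) assms(2)] .
  then obtain z where z: "pair_reach V E B W y z" "pair_arc V E B W z p"
    using y(2) unfolding pair_reach_def by (metis rtranclp.cases)
  have "z \<in> S"
  proof (rule comp_mem[OF sc assms(2)])
    show "z \<in> pair_verts V" using arc_verts[OF z(2)] by simp
    show "pair_reach V E B W z p" using z(2) by (rule reach_arc)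
    show "pair_reach V E B W p z"
      using reach_trans[OF comp_reach[OF sc assms(2) y(1)] z(1)] .
  qed
  with z show ?thesis by blast
qed

lemma pv: "(x,y) \<in> pair_verts V \<longleftrightarrow> x \<in> V \<and> y \<in> V \<and> x \<noteq> y"
  unfolding pair_verts_def by auto

lemma ip5: "induced_path V E [x0,x1,x2,x3,x4] \<longleftrightarrow> distinct [x0,x1,x2,x3,x4] \<and> set [x0,x1,x2,x3,x4] \<subseteq> V \<and>
   E x0 x1 \<and> E x1 x0 \<and> E x1 x2 \<and> E x2 x1 \<and> E x2 x3 \<and> E x3 x2 \<and> E x3 x4 \<and> E x4 x3 \<and>
   \<not> E x0 x0 \<and> \<not> E x1 x1 \<and> \<not> E x2 x2 \<and> \<not> E x3 x3 \<and> \<not> E x4 x4 \<and>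
   \<not> E x0 x2 \<and> \<not> E x2 x0 \<and> \<not> E x0 x3 \<and> \<not> E x3 x0 \<and> \<not> E x0 x4 \<and> \<not> E x4 x0 \<and>
   \<not> E x1 x3 \<and> \<not> E x3 x1 \<and> \<not> E x1 x4 \<and> \<not> E x4 x1 \<and> \<not> E x2 x4 \<and> \<not> E x4 x2"
  unfolding induced_path_def
  by (simp add: less_Suc_eq all_conj_distrib numeral_eq_Suc) blast

lemma fwd:
  assumes bg: "bigraph V E B W" and ip: "induced_path V E [a, b, c, d, e]" and nb: "nbhd E a \<subseteq> nbhd E c"
  shows "\<exists>S. nontrivial_strong_component V E B W S \<and> implies_pair V E B W S (a, c) \<and>
                 (a, d) \<in> S \<and> (a, e) \<in> S \<and> (b, d) \<in> S \<and> (b, e) \<in> S"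
proof -
  note P = ip[unfolded ip5]
  have cab: "a \<in> B \<longleftrightarrow> b \<notin> B" "b \<in> B \<longleftrightarrow> c \<notin> B" "c \<in> B \<longleftrightarrow> d \<notin> B" "d \<in> B \<longleftrightarrow> e \<notin> B"
    using bg_edge[OF bg] P by blast+
  note A = arc_iff[OF bg]
  have a1: "pair_arc V E B W (a,d) (a,e)" using P cab by (auto simp: A)
  have a2: "pair_arc V E B W (a,e) (b,e)" using P cab by (auto simp: A)
  have a3: "pair_arc V E B W (b,e) (b,d)" using P cab by (auto simp: A)
  have a4: "pair_arc V E B W (b,d) (a,d)" using P cab by (auto simp: A)
  have a5: "pair_arc V E B W (a,d) (a,c)" using P cab by (auto simp: A)
  have noout: "\<not> pair_arc V E B W (a,c) p" for p
  proof
    assume "pair_arc V E B W (a,c) p"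
    moreover obtain x y where "p = (x,y)" by (cases p)
    ultimately have "pair_arc V E B W (a,c) (x,y)" by simp
    then have "E a x" "\<not> E c x" using cab by (auto simp: A)
    with nb show False unfolding nbhd_def by auto
  qed
  define S where "S = {y \<in> pair_verts V. pair_reach V E B W (a,d) y \<and> pair_reach V E B W y (a,d)}"
  have pvad: "(a,d) \<in> pair_verts V" using arc_verts[OF a1] by simp
  have sc: "strong_component V E B W S" unfolding strong_component_def S_def using pvad by blast
  note R = reach_arc[OF a1] reach_arc[OF a2] reach_arc[OF a3] reach_arc[OF a4]
  have ad: "(a,d) \<in> S" unfolding S_def using pvad by (simp add: pair_reach_def)
  have ae: "(a,e) \<in> S" unfolding S_def using arc_verts[OF a1] R by (blast intro: reach_trans)
  have be: "(b,e) \<in> S" unfolding S_def using arc_verts[OF a2] R by (blast intro: reach_trans)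
  have bd: "(b,d) \<in> S" unfolding S_def using arc_verts[OF a3] R by (blast intro: reach_trans)
  have fin: "finite S"
  proof (rule finite_subset[OF comp_sub[OF sc]])
    have "finite V" using bg unfolding bigraph_def by blast
    then have "finite (V \<times> V)" by simp
    moreover have "pair_verts V \<subseteq> V \<times> V" unfolding pair_verts_def by auto
    ultimately show "finite (pair_verts V)" by (rule finite_subset[rotated])
  qed
  have "d \<noteq> e" using P by simp
  then have "card {(a,d),(a,e)} = 2" by simp
  moreover have "card {(a,d),(a,e)} \<le> card S" using ad ae fin by (intro card_mono) auto
  ultimately have c: "card S > 1" by simp
  have notin: "(a,c) \<notin> S"
  proof
    assume "(a,c) \<in> S"
    then have "pair_reach V E B W (a,c) (a,d)" unfolding S_def by simp
    then have "(a,c) = (a,d)" unfolding pair_reach_def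
      by (metis converse_rtranclpE noout)
    then show False using P by simp
  qed
  show ?thesis
    apply (rule exI[of _ S])
    using sc c notin ad ae bd be a5
    unfolding nontrivial_strong_component_def implies_pair_def by blast
qed

lemma bwd:
  assumes bg: "bigraph V E B W" and ns: "nontrivial_strong_component V E B W S"
    and imp: "implies_pair V E B W S (a, c)"
  shows "\<exists>b d e. induced_path V E [a, b, c, d, e] \<and> nbhd E a \<subseteq> nbhd E c"
proof -
  have sc: "strong_component V E B W S" using ns unfolding nontrivial_strong_component_def by simp
  note A = arc_iff[OF bg]
  note BE = bg_edge[OF bg]
  obtain q where q: "q \<in> S" "pair_arc V E B W q (a,c)" and nac: "(a,c) \<notin> S"
    using imp unfolding implies_pair_def by blast
  obtain u v where quv: "q = (u,v)" by (cases q)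
  have bk: False if "pair_reach V E B W (a,c) q"
    using comp_mem[OF sc q(1) _ that reach_arc[OF q(2)]] arc_verts[OF q(2)] nac by blast
  show ?thesis
  proof (cases "a \<in> B \<longleftrightarrow> c \<in> B")
    case False
    then have h: "v = c" "E u a" "\<not> E c a" "u \<in> B \<longleftrightarrow> c \<in> B" "u \<in> V" "c \<in> V" "u \<noteq> c" "a \<in> V"
      using q(2) BE[of u a] BE[of v c] unfolding quv by (auto simp: A)
    obtain z where z: "z \<in> S" "pair_arc V E B W z (u,c)" using pred_in[OF ns] q(1) quv h(1) by blast
    obtain u1 w where zz: "z = (u1,w)" by (cases z)
    have hz: "u1 = u" "E w c" "\<not> E u w" "w \<in> V"
      using z(2) h BE[of u1 u] BE[of w c] unfolding zz by (auto simp: A)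
    have r1: "pair_arc V E B W (a,c) (a,w)"
      using h hz BE[of w c] BE[of u a] BE[of a c] BE[of a w] BE[of w u] False by (auto simp: A)
    have r2: "pair_arc V E B W (a,w) (u,w)"
      using h hz BE[of w c] BE[of u a] BE[of a c] BE[of a w] BE[of w u] False by (auto simp: A)
    have "pair_reach V E B W (a,c) q"
      using reach_arc[OF r1] reach_arc[OF r2] reach_arc[OF z(2)] quv h(1) zz hz(1)
      by (blast intro: reach_trans)
    then show ?thesis using bk by blast
  next
    case True
    then have h: "u = a" "E v c" "\<not> E a v" "\<not> (a \<in> B \<longleftrightarrow> v \<in> B)" "a \<in> V" "v \<in> V" "c \<in> V" "a \<noteq> c"
      using q(2) BE[of u a] BE[of v c] unfolding quv by (auto simp: A)
    obtain z where z: "z \<in> S" "pair_arc V E B W z (a,v)" using pred_in[OF ns] q(1) quv h(1) by blast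
    obtain x w where zz: "z = (x,w)" by (cases z)
    have hz: "w = v" "E x a" "x \<in> V" "x \<noteq> v" "x \<in> B \<longleftrightarrow> v \<in> B"
      using z(2) h BE[of w v] BE[of x a] unfolding zz by (auto simp: A)
    have nb: "nbhd E a \<subseteq> nbhd E c"
    proof
      fix y assume "y \<in> nbhd E a"
      then have ay: "E a y" unfolding nbhd_def by simp
      show "y \<in> nbhd E c"
      proof (rule ccontr)
        assume "y \<notin> nbhd E c"
        then have cy: "\<not> E c y" unfolding nbhd_def by simp
        have r1: "pair_arc V E B W (a,c) (y,c)"
          using h ay cy BE[of y c] BE[of v a] BE[of y v] BE[of v y] BE[of a y] BE[of v c] True by (auto simp: A)
        have r2: "pair_arc V E B W (y,c) (y,v)"
          using h ay cy BE[of y c] BE[of v a] BE[of y v] BE[of v y] BE[of a y] BE[of v c] BE[of c y] True by (auto simp: A)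
        have r3: "pair_arc V E B W (y,v) (a,v)"
          using h ay cy BE[of y c] BE[of v a] BE[of y v] BE[of v y] BE[of a y] BE[of v c] BE[of c y] True by (auto simp: A)
        have "pair_reach V E B W (a,c) q"
          using reach_arc[OF r1] reach_arc[OF r2] reach_arc[OF r3] quv h(1)
          by (blast intro: reach_trans)
        then show False using bk by blast
      qed
    qed
    have "x \<in> nbhd E a" using hz(2) BE[of x a] unfolding nbhd_def by blast
    then have "E c x" using nb unfolding nbhd_def by blast
    then have xc: "E x c" using BE[of c x] by blast
    obtain z' where z': "z' \<in> S" "pair_arc V E B W z' (x,v)" using pred_in[OF ns] z(1) zz hz(1) by blast
    obtain x1 y where zz': "z' = (x1,y)" by (cases z')
    have hz': "x1 = x" "E y v" "\<not> E x y" "y \<in> V"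
      using z'(2) hz BE[of x1 x] BE[of y v] unfolding zz' by (auto simp: A)
    have e1: "E a x" "E x c" "E c v" "E v y" using hz(2) xc h(2) hz'(2) BE by blast+
    note cols = BE[OF e1(1)] BE[OF e1(2)] BE[OF e1(3)] BE[OF e1(4)]
    have ne: "\<not> E p r" if "p \<in> B \<longleftrightarrow> r \<in> B" for p r using BE[of p r] that by blast
    have "induced_path V E [a, x, c, v, y]"
      unfolding ip5
      using e1 cols h(3) hz'(3) h(8) hz(4) ne[of a c] ne[of a y] ne[of c y] ne[of x v] ne[of a a] ne[of x x]
        ne[of c c] ne[of v v] ne[of y y] ne[of c a] ne[of y a] ne[of y c] ne[of v x] BE[of v a] BE[of y x]
      by auto
    with nb show ?thesis by blast
  qed
qed

theorem lemma2p6: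
  assumes "bigraph V E B W"
    and "a \<in> V" and "c \<in> V" and "a \<noteq> c"
  shows "((\<exists>S. nontrivial_strong_component V E B W S \<and> implies_pair V E B W S (a, c)) \<longleftrightarrow>
          (\<exists>b d e. induced_path V E [a, b, c, d, e] \<and> nbhd E a \<subseteq> nbhd E c))
       \<and> (\<forall>b d e. induced_path V E [a, b, c, d, e] \<and> nbhd E a \<subseteq> nbhd E c \<longrightarrow>
            (\<exists>S. nontrivial_strong_component V E B W S \<and> implies_pair V E B W S (a, c) \<and>
                 (a, d) \<in> S \<and> (a, e) \<in> S \<and> (b, d) \<in> S \<and> (b, e) \<in> S))"
  using fwd[OF assms(1)] bwd[OF assms(1)] by blast

end
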